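(* There is an absolute constant $C$ such that for all sufficiently large $N$, every $b\in Z(W)$ and every function $f:[N]\to\mathbb{C}$ with $|f(n)|\le\nu_b(n)$ for all $n$, $$\sum_{n\in[N]}|\hat f(n/N)|^4\le C N^4(\log N)^8.$$
   Context: Standing setup: $N$ is a large positive integer and $w\ge 3$ is a real parameter with $w\le C_0\log\log\log N$ for a fixed absolute constant $C_0$; $W=8\prod_{2<p<w}p$ (product over primes). $[q]=\{1,\dots,q\}$, $[q]^*=\{a\in[q]:\gcd(a,q)=1\}$. $Z(W)=\{b\in[W]^*: b\equiv h^2\pmod W\text{ for some } h\}$; for $b\in Z(W)$, $H(b)=\{h\in[W]^*:h^2\equiv b\pmod W\}$, $H=|H(b)|=4\cdot 2^{|\{p:2<p<w\}|}$. $\phi$ is Euler's function, $e(x)=e^{2\pi ix}$, $\hat f(\alpha)=\sum_nf(n)e(n\alpha)$. $\nu_b(n)=\frac{\phi(W)}{WH}2p\log p$ if $n\in[N]$ and $Wn+b=p^2$ with $p$ prime, $\nu_b(n)=0$ otherwise. *)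

theory Defs
  imports "HOL-Analysis.Analysis" "HOL-Number_Theory.Number_Theory"
begin

definition WW :: "real \<Rightarrow> nat" where
  "WW w = 8 * (\<Prod>p\<in>{p::nat. prime p \<and> 2 < p \<and> real p < w}. p)"

definition ZW :: "nat \<Rightarrow> nat set" where
  "ZW W = {b \<in> {1..W}. coprime b W \<and> (\<exists>h::nat. [b = h^2] (mod W))}"

definition HW :: "nat \<Rightarrow> nat \<Rightarrow> nat set" where
  "HW W b = {h \<in> {1..W}. coprime h W \<and> [h^2 = b] (mod W)}"

text \<open>nu_b(n), depending on N, W, b. If W n + b = p^2 with p prime, then p = sqrt(W n + b).\<close>
definition nu :: "nat \<Rightarrow> nat \<Rightarrow> nat \<Rightarrow> nat \<Rightarrow> real" where
  "nu N W b n =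
     (if n \<in> {1..N} \<and> (\<exists>p::nat. prime p \<and> W * n + b = p^2)
      then (let p = sqrt (real (W * n + b)) in
              real (totient W) / (real W * real (card (HW W b))) * (2 * p * ln p))
      else 0)"

definition e :: "real \<Rightarrow> complex" where
  "e x = exp (2 * pi * \<i> * complex_of_real x)"

definition fhat :: "nat \<Rightarrow> (nat \<Rightarrow> complex) \<Rightarrow> real \<Rightarrow> complex" where
  "fhat N f \<alpha> = (\<Sum>n\<in>{1..N}. f n * e (real n * \<alpha>))"

end

theory Submission
  imports Defs "HOL-Real_Asymp.Real_Asymp"
begin


lemma harm_le_1_ln: "n \<ge> 1 \<Longrightarrow> (harm n :: real) \<le> 1 + ln (real n)"
  using euler_mascheroni_sequence_decreasing[of 1 n] by (simp add: harm_expand)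

lemma card_sigma_div: "real (card (SIGMA u:{1..K::nat}. {1..K div u})) \<le> real K * (1 + ln (real K))"
proof (cases "K = 0")
  case True then show ?thesis by simp
next
  case False
  have "card (SIGMA u:{1..K::nat}. {1..K div u}) = (\<Sum>u=1..K. K div u)"
    by (simp add: card_SigmaI)
  hence "real (card (SIGMA u:{1..K::nat}. {1..K div u})) = (\<Sum>u=1..K. real (K div u))" by simp
  also have "\<dots> \<le> (\<Sum>u=1..K. real K * inverse (real u))"
    by (intro sum_mono) (metis of_nat_div_le_of_nat divide_inverse)
  also have "\<dots> = real K * harm K" by (simp add: harm_def sum_distrib_left)
  also have "\<dots> \<le> real K * (1 + ln (real K))"
    using harm_le_1_ln[of K] False by (intro mult_left_mono) auto
  finally show ?thesis .
qed

lemma mult_energy: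
  "real (card {(a,a',c,c'). a \<in> {1..K::nat} \<and> a' \<in> {1..K} \<and> c \<in> {1..K} \<and> c' \<in> {1..K} \<and> a*a' = c*c'})
     \<le> (real K * (1 + ln (real K)))^2"
proof -
  define A where "A = (SIGMA u:{1..K::nat}. {1..K div u})"
  define \<phi> :: "(nat\<times>nat)\<times>(nat\<times>nat) \<Rightarrow> nat\<times>nat\<times>nat\<times>nat" where "\<phi> = (\<lambda>p. (fst (fst p) * fst (snd p), snd (fst p) * snd (snd p), fst (fst p) * snd (fst p), fst (snd p) * snd (snd p)))"
  let ?T = "{(a,a',c,c'). a \<in> {1..K::nat} \<and> a' \<in> {1..K} \<and> c \<in> {1..K} \<and> c' \<in> {1..K} \<and> a*a' = c*c'}"
  have sub: "?T \<subseteq> \<phi> ` (A \<times> A)"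
  proof
    fix x assume "x \<in> ?T"
    then obtain a a' c c' where x: "x = (a,a',c,c')" and r: "a \<in> {1..K}" "a' \<in> {1..K}" "c \<in> {1..K}" "c' \<in> {1..K}" "a*a' = c*c'"
      by auto
    define u where "u = gcd a c"
    define v where "v = a div u"
    define s where "s = c div u"
    have up: "u > 0" using r u_def by auto
    have av: "a = u * v" unfolding v_def u_def by simp
    have cs: "c = u * s" unfolding s_def u_def by simp
    have cop: "coprime v s" unfolding v_def s_def u_def using r
      by (intro div_gcd_coprime) auto
    have "u * (v * a') = u * (s * c')" using r(5) av cs by (simp add: ac_simps)
    hence e: "v * a' = s * c'" using up by simp
    hence "s dvd v * a'" by simp
    hence "s dvd a'" using cop by (metis coprime_commute coprime_dvd_mult_right_iff)
    then obtain t where at: "a' = s * t" by auto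
    have sp: "s > 0" using r cs by (cases s) auto
    have vp: "v > 0" using r av by (cases v) auto
    have "s * c' = s * (v * t)" using e unfolding at by (simp only: mult.left_commute)
    hence ct: "c' = v * t" using sp by simp
    have tp: "t > 0" using r at by (cases t) auto
    have "s \<le> K div u" using r cs up by (simp add: div_le_mono less_eq_div_iff_mult_less_eq mult.commute)
    moreover have "t \<le> K div v" using r ct vp by (simp add: less_eq_div_iff_mult_less_eq mult.commute)
    moreover have "u \<le> K" proof - have "u \<le> u * v" using vp by simp moreover have "u * v \<le> K" using r(1) av by simp ultimately show ?thesis by (rule order_trans) qed
    moreover have "v \<le> K" proof - have "v \<le> u * v" using up by simp moreover have "u * v \<le> K" using r(1) av by simp ultimately show ?thesis by (rule order_trans) qed
    ultimately have "((u,s),(v,t)) \<in> A \<times> A" using up sp vp tp r(1) unfolding A_def av by auto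
    moreover have "x = \<phi> ((u,s),(v,t))" unfolding \<phi>_def x using av cs at ct by simp
    ultimately show "x \<in> \<phi> ` (A \<times> A)" by blast
  qed
  have fA: "finite A" unfolding A_def by auto
  have "card ?T \<le> card (\<phi> ` (A \<times> A))" by (rule card_mono) (use fA sub in auto)
  also have "\<dots> \<le> card (A \<times> A)" by (rule card_image_le) (use fA in auto)
  also have "\<dots> = card A * card A" by (simp add: card_cartesian_product)
  finally have c1: "card ?T \<le> card A * card A" .
  have "real (card ?T) \<le> real (card A) * real (card A)"
    using c1 by (simp only: of_nat_mult[symmetric] of_nat_le_iff)
  also have "\<dots> \<le> (real K * (1 + ln (real K))) * (real K * (1 + ln (real K)))"
  proof -
    have h: "real (card A) \<le> real K * (1 + ln (real K))" using card_sigma_div[of K] unfolding A_def .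
    have "0 \<le> real K * (1 + ln (real K))" using h by (rule order_trans[rotated]) simp
    thus ?thesis by (intro mult_mono[OF h h]) simp_all
  qed
  finally show ?thesis by (simp add: power2_eq_square)
qed



definition MEn :: "nat \<Rightarrow> (nat\<times>nat\<times>nat\<times>nat) set" where
  "MEn K = {(a,a',c,c'). a \<in> {1..K::nat} \<and> a' \<in> {1..K} \<and> c \<in> {1..K} \<and> c' \<in> {1..K} \<and> a*a' = c*c'}"

definition SqEn :: "nat \<Rightarrow> (nat\<times>nat\<times>nat\<times>nat) set" where
  "SqEn M = {(k1,k2,k3,k4). k1 \<in> {1..M} \<and> k2 \<in> {1..M} \<and> k3 \<in> {1..M} \<and> k4 \<in> {1..M} \<and> k1^2+k2^2 = k3^2+k4^2}"

lemma fin_MEn: "finite (MEn K)"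
  by (rule finite_subset[of _ "{1..K} \<times> {1..K} \<times> {1..K} \<times> {1..K}"]) (auto simp: MEn_def)

lemma sq_aux:
  fixes k1 k2 k3 k4 :: nat
  assumes "k1^2+k2^2 = k3^2+k4^2" "k3 < k1"
  shows "k2 < k4 \<and> (k1-k3)*(k1+k3) = (k4-k2)*(k4+k2)"
proof -
  have "k3^2 < k1^2" using assms(2) by (simp add: power_strict_mono)
  hence "k2^2 < k4^2" using assms(1) by linarith
  hence lt: "k2 < k4" by (simp add: power_less_imp_less_base)
  have "int k1^2 + int k2^2 = int k3^2 + int k4^2" using assms(1) by (metis of_nat_add of_nat_power)
  hence "(int k1 - int k3)*(int k1 + int k3) = (int k4 - int k2)*(int k4 + int k2)"
    by (simp add: algebra_simps power2_eq_square)
  hence "int ((k1-k3)*(k1+k3)) = int ((k4-k2)*(k4+k2))"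
    using lt assms(2) by (simp add: of_nat_diff)
  thus ?thesis using lt by (simp only: of_nat_eq_iff)
qed

lemma diff_sum_eq: "(b::nat) < a \<Longrightarrow> d < c \<Longrightarrow> a - b = c - d \<Longrightarrow> a + b = c + d \<Longrightarrow> a = c \<and> b = d"
  by arith

lemma sq_energy: "real (card (SqEn M)) \<le> real M ^ 2 + 2 * (real (2*M) * (1 + ln (real (2*M))))^2"
proof -
  define T1 where "T1 = {x \<in> SqEn M. fst x = fst (snd (snd x))}"
  define T2 where "T2 = {x \<in> SqEn M. fst x > fst (snd (snd x))}"
  define T3 where "T3 = {x \<in> SqEn M. fst x < fst (snd (snd x))}"
  have un: "SqEn M = T1 \<union> T2 \<union> T3" unfolding T1_def T2_def T3_def by auto
  have fS: "finite (SqEn M)"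
    by (rule finite_subset[of _ "{1..M} \<times> {1..M} \<times> {1..M} \<times> {1..M}"]) (auto simp: SqEn_def)
  have "T1 \<subseteq> (\<lambda>p. (fst p, snd p, fst p, snd p)) ` ({1..M} \<times> {1..M})"
  proof
    fix x assume "x \<in> T1"
    then obtain k1 k2 k3 k4 where x: "x = (k1,k2,k3,k4)" and h: "k1 \<in> {1..M}" "k2 \<in> {1..M}" "k1 = k3" "k1^2+k2^2 = k3^2+k4^2"
      unfolding T1_def SqEn_def by auto
    have "k2^2 = k4^2" using h by simp
    hence "k2 = k4" by (simp add: power2_eq_iff_nonneg)
    thus "x \<in> (\<lambda>p. (fst p, snd p, fst p, snd p)) ` ({1..M} \<times> {1..M})"
      using x h by (intro image_eqI[of _ _ "(k1,k2)"]) auto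
  qed
  hence "card T1 \<le> card ((\<lambda>p. (fst p, snd p, fst p, snd p)) ` ({1..M} \<times> {1..M}))"
    by (intro card_mono) auto
  also have "\<dots> \<le> card ({1..M} \<times> {1..M})" by (rule card_image_le) auto
  also have "\<dots> = M * M" by (simp add: card_cartesian_product)
  finally have c1: "card T1 \<le> M * M" .
  define g2 where "g2 = (\<lambda>(k1::nat,k2::nat,k3::nat,k4::nat). (k1-k3, k1+k3, k4-k2, k4+k2))"
  define g3 where "g3 = (\<lambda>(k1::nat,k2::nat,k3::nat,k4::nat). (k3-k1, k3+k1, k2-k4, k2+k4))"
  have im2: "g2 ` T2 \<subseteq> MEn (2*M)"
  proof
    fix y assume "y \<in> g2 ` T2"
    then obtain k1 k2 k3 k4 where y: "y = g2 (k1,k2,k3,k4)" and h: "k1 \<in> {1..M}" "k2 \<in> {1..M}"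
       "k3 \<in> {1..M}" "k4 \<in> {1..M}" "k1^2+k2^2 = k3^2+k4^2" "k3 < k1"
      unfolding T2_def SqEn_def by auto
    from sq_aux[OF h(5,6)] have s: "k2 < k4" "(k1-k3)*(k1+k3) = (k4-k2)*(k4+k2)" by auto
    have r: "k1-k3 \<in> {1..2*M}" "k1+k3 \<in> {1..2*M}" "k4-k2 \<in> {1..2*M}" "k4+k2 \<in> {1..2*M}"
      using h(1-4,6) s(1) by (simp_all only: atLeastAtMost_iff) linarith+
    show "y \<in> MEn (2*M)" unfolding y g2_def MEn_def using r s(2) by simp
  qed
  have im3: "g3 ` T3 \<subseteq> MEn (2*M)"
  proof
    fix y assume "y \<in> g3 ` T3"
    then obtain k1 k2 k3 k4 where y: "y = g3 (k1,k2,k3,k4)" and h: "k1 \<in> {1..M}" "k2 \<in> {1..M}"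
       "k3 \<in> {1..M}" "k4 \<in> {1..M}" "k1^2+k2^2 = k3^2+k4^2" "k1 < k3"
      unfolding T3_def SqEn_def by auto
    have "k3^2+k4^2 = k1^2+k2^2" using h by simp
    from sq_aux[OF this h(6)] have s: "k4 < k2" "(k3-k1)*(k3+k1) = (k2-k4)*(k2+k4)" by auto
    have r: "k3-k1 \<in> {1..2*M}" "k3+k1 \<in> {1..2*M}" "k2-k4 \<in> {1..2*M}" "k2+k4 \<in> {1..2*M}"
      using h(1-4,6) s(1) by (simp_all only: atLeastAtMost_iff) linarith+
    show "y \<in> MEn (2*M)" unfolding y g3_def MEn_def using r s(2) by simp
  qed
  have inj2: "inj_on g2 T2"
  proof (rule inj_onI)
    fix x y assume xT: "x \<in> T2" and yT: "y \<in> T2" and gg: "g2 x = g2 y"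
    obtain k1 k2 k3 k4 where x: "x = (k1,k2,k3,k4)" by (cases x) auto
    obtain l1 l2 l3 l4 where y: "y = (l1,l2,l3,l4)" by (cases y) auto
    have hk: "k3 < k1" "k1^2+k2^2 = k3^2+k4^2" using xT unfolding x T2_def SqEn_def by auto
    have hl: "l3 < l1" "l1^2+l2^2 = l3^2+l4^2" using yT unfolding y T2_def SqEn_def by auto
    have e: "k1-k3 = l1-l3" "k1+k3=l1+l3" "k4-k2 = l4-l2" "k4+k2 = l4+l2"
      using gg unfolding x y g2_def by simp_all
    have "k2 < k4" using sq_aux[OF hk(2) hk(1)] by blast
    moreover have "l2 < l4" using sq_aux[OF hl(2) hl(1)] by blast
    ultimately have "k4 = l4 \<and> k2 = l2" using diff_sum_eq e(3,4) by blast
    moreover have "k1 = l1 \<and> k3 = l3" using diff_sum_eq hk(1) hl(1) e(1,2) by blast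
    ultimately show "x = y" unfolding x y by simp
  qed
  have inj3: "inj_on g3 T3"
  proof (rule inj_onI)
    fix x y assume xT: "x \<in> T3" and yT: "y \<in> T3" and gg: "g3 x = g3 y"
    obtain k1 k2 k3 k4 where x: "x = (k1,k2,k3,k4)" by (cases x) auto
    obtain l1 l2 l3 l4 where y: "y = (l1,l2,l3,l4)" by (cases y) auto
    have hk: "k1 < k3" "k3^2+k4^2 = k1^2+k2^2" using xT unfolding x T3_def SqEn_def by auto
    have hl: "l1 < l3" "l3^2+l4^2 = l1^2+l2^2" using yT unfolding y T3_def SqEn_def by auto
    have e: "k3-k1 = l3-l1" "k3+k1=l3+l1" "k2-k4 = l2-l4" "k2+k4 = l2+l4"
      using gg unfolding x y g3_def by simp_all
    have "k4 < k2" using sq_aux[OF hk(2) hk(1)] by blast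
    moreover have "l4 < l2" using sq_aux[OF hl(2) hl(1)] by blast
    ultimately have "k2 = l2 \<and> k4 = l4" using diff_sum_eq e(3,4) by blast
    moreover have "k3 = l3 \<and> k1 = l1" using diff_sum_eq hk(1) hl(1) e(1,2) by blast
    ultimately show "x = y" unfolding x y by simp
  qed
  have c2: "card T2 \<le> card (MEn (2*M))"
    using card_inj_on_le[OF inj2 im2 fin_MEn] .
  have c3: "card T3 \<le> card (MEn (2*M))"
    using card_inj_on_le[OF inj3 im3 fin_MEn] .
  have "card (SqEn M) \<le> card T1 + card T2 + card T3"
    unfolding un using card_Un_le[of "T1 \<union> T2" T3] card_Un_le[of T1 T2] by linarith
  hence "card (SqEn M) \<le> M * M + 2 * card (MEn (2*M))" using c1 c2 c3 by linarith
  hence "real (card (SqEn M)) \<le> real (M * M + 2 * card (MEn (2*M)))"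
    by (simp only: of_nat_le_iff)
  also have "\<dots> = real M * real M + 2 * real (card (MEn (2*M)))" by simp
  also have "\<dots> \<le> real M ^ 2 + 2 * (real (2*M) * (1 + ln (real (2*M))))^2"
  proof -
    have me: "real (card (MEn (2*M))) \<le> (real (2*M) * (1 + ln (real (2*M))))^2"
      unfolding MEn_def by (rule mult_energy)
    have "real M * real M = real M ^ 2" by (rule power2_eq_square[symmetric])
    thus ?thesis using me by linarith
  qed
  finally show ?thesis .
qed



lemma e_add: "e (x + y) = e x * e y"
  unfolding e_def by (simp add: distrib_left exp_add[symmetric])

lemma e_cnj: "cnj (e x) = e (- x)"
  unfolding e_def by (simp add: exp_cnj)

lemma e_nat_mult: "e (real k * x) = e x ^ k"
  unfolding e_def by (simp add: exp_of_nat_mult[symmetric] ac_simps)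

lemma e_int: "e (of_int n) = 1"
  unfolding e_def exp_eq_1 by simp

lemma e_eq_1: "e x = 1 \<Longrightarrow> \<exists>n::int. x = of_int n"
proof -
  assume "e x = 1"
  hence "exp (complex_of_real (2 * pi * x) * \<i>) = 1" unfolding e_def by (simp add: ac_simps)
  then obtain n :: int where "2 * pi * x = of_int (2*n) * pi" unfolding exp_eq_1 by auto
  hence "x = of_int n" by simp
  thus ?thesis by blast
qed

lemma e_mult_cnj: "e x * cnj (e y) = e (x - y)"
  by (simp add: e_cnj e_add[symmetric])

lemma norm_e [simp]: "norm (e x) = 1"
  unfolding e_def by (simp add: norm_exp_eq_Re)

lemma orth_sum:
  fixes d :: int and N :: nat
  assumes "d \<noteq> 0" "\<bar>d\<bar> < int N"
  shows "(\<Sum>k=1..N. e (real_of_int d * (real k / real N))) = 0"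
proof -
  have Np: "N > 0" using assms by linarith
  define z where "z = e (real_of_int d / real N)"
  have zk: "e (real_of_int d * (real k / real N)) = z ^ k" for k
    unfolding z_def e_nat_mult[symmetric] by (simp add: field_simps)
  have zN: "z ^ N = 1" using zk[of N] Np e_int[of d] by simp
  have z1: "z \<noteq> 1"
  proof
    assume "z = 1"
    then obtain n :: int where n: "real_of_int d / real N = of_int n" using e_eq_1 unfolding z_def by blast
    hence "real_of_int d = of_int n * real N" using Np by (simp add: field_simps)
    hence dn: "d = n * int N" by (metis of_int_eq_iff of_int_mult of_int_of_nat_eq)
    show False
    proof (cases "n = 0")
      case True then show ?thesis using dn assms by simp
    next
      case False
      hence "\<bar>n\<bar> \<ge> 1" by linarith
      hence "\<bar>d\<bar> \<ge> int N" unfolding dn abs_mult by (simp add: mult_le_cancel_right1)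
      then show ?thesis using assms by linarith
    qed
  qed
  have "(\<Sum>k=1..N. e (real_of_int d * (real k / real N))) = (\<Sum>k=1..N. z ^ k)" using zk by simp
  also have "\<dots> = (\<Sum>k<N. z ^ Suc k)"
    by (rule sum.reindex_bij_witness[of _ Suc "\<lambda>k. k - 1"]) auto
  also have "\<dots> = z * (\<Sum>k<N. z ^ k)" by (simp add: sum_distrib_left)
  also have "\<dots> = 0" using z1 zN by (simp add: geometric_sum)
  finally show ?thesis .
qed

lemma orth:
  fixes c :: "'a \<Rightarrow> complex" and \<sigma> :: "'a \<Rightarrow> nat" and N :: nat
  assumes fA: "finite A" and Np: "N > 0"
    and rng: "\<And>P Q. P \<in> A \<Longrightarrow> Q \<in> A \<Longrightarrow> c P \<noteq> 0 \<Longrightarrow> c Q \<noteq> 0 \<Longrightarrow> \<sigma> P < \<sigma> Q + N \<and> \<sigma> Q < \<sigma> P + N"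
  shows "(\<Sum>k=1..N. norm (\<Sum>P\<in>A. c P * e (real (\<sigma> P) * (real k / real N)))^2)
          \<le> real N * (\<Sum>P\<in>A. \<Sum>Q\<in>A. if \<sigma> P = \<sigma> Q then norm (c P) * norm (c Q) else 0)"
proof -
  define G where "G k = (\<Sum>P\<in>A. c P * e (real (\<sigma> P) * (real k / real N)))" for k :: nat
  have inner: "(\<Sum>k=1..N. c P * cnj (c Q) * e ((real (\<sigma> P) - real (\<sigma> Q)) * (real k / real N)))
      = (if \<sigma> P = \<sigma> Q then of_nat N * (c P * cnj (c Q)) else 0)" if "P \<in> A" "Q \<in> A" for P Q
  proof (cases "c P = 0 \<or> c Q = 0")
    case True then show ?thesis by auto
  next
    case False
    show ?thesis
    proof (cases "\<sigma> P = \<sigma> Q")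
      case True then show ?thesis by (simp add: e_def)
    next
      case ne: False
      define d where "d = int (\<sigma> P) - int (\<sigma> Q)"
      have "d \<noteq> 0" "\<bar>d\<bar> < int N" using rng[OF that] False ne unfolding d_def by auto
      from orth_sum[OF this]
      have "(\<Sum>k=1..N. e ((real (\<sigma> P) - real (\<sigma> Q)) * (real k / real N))) = 0"
        unfolding d_def by simp
      then show ?thesis using ne by (simp add: sum_distrib_left[symmetric])
    qed
  qed
  have "complex_of_real (\<Sum>k=1..N. norm (G k)^2) = (\<Sum>k=1..N. G k * cnj (G k))"
    by (simp only: of_real_sum complex_norm_square)
  also have "\<dots> = (\<Sum>k=1..N. \<Sum>P\<in>A. \<Sum>Q\<in>A. c P * cnj (c Q) * e ((real (\<sigma> P) - real (\<sigma> Q)) * (real k / real N)))"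
  proof (rule sum.cong[OF refl])
    fix k
    have "G k * cnj (G k) = (\<Sum>P\<in>A. \<Sum>Q\<in>A. (c P * e (real (\<sigma> P) * (real k / real N))) * cnj (c Q * e (real (\<sigma> Q) * (real k / real N))))"
      unfolding G_def cnj_sum sum_product ..
    also have "\<dots> = (\<Sum>P\<in>A. \<Sum>Q\<in>A. c P * cnj (c Q) * e ((real (\<sigma> P) - real (\<sigma> Q)) * (real k / real N)))"
    proof (intro sum.cong refl)
      fix P Q
      have "(c P * e (real (\<sigma> P) * (real k / real N))) * cnj (c Q * e (real (\<sigma> Q) * (real k / real N)))
          = c P * cnj (c Q) * (e (real (\<sigma> P) * (real k / real N)) * cnj (e (real (\<sigma> Q) * (real k / real N))))"
        by (simp add: ac_simps)
      also have "\<dots> = c P * cnj (c Q) * e ((real (\<sigma> P) - real (\<sigma> Q)) * (real k / real N))"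
        by (simp only: e_mult_cnj left_diff_distrib)
      finally show "(c P * e (real (\<sigma> P) * (real k / real N))) * cnj (c Q * e (real (\<sigma> Q) * (real k / real N)))
          = c P * cnj (c Q) * e ((real (\<sigma> P) - real (\<sigma> Q)) * (real k / real N))" .
    qed
    finally show "G k * cnj (G k) = (\<Sum>P\<in>A. \<Sum>Q\<in>A. c P * cnj (c Q) * e ((real (\<sigma> P) - real (\<sigma> Q)) * (real k / real N)))" .
  qed
  also have "\<dots> = (\<Sum>P\<in>A. \<Sum>Q\<in>A. \<Sum>k=1..N. c P * cnj (c Q) * e ((real (\<sigma> P) - real (\<sigma> Q)) * (real k / real N)))"
    by (subst sum.swap, rule sum.cong[OF refl], rule sum.swap)
  also have "\<dots> = (\<Sum>P\<in>A. \<Sum>Q\<in>A. if \<sigma> P = \<sigma> Q then of_nat N * (c P * cnj (c Q)) else 0)"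
    using inner by (intro sum.cong refl) auto
  finally have eq: "complex_of_real (\<Sum>k=1..N. norm (G k)^2) = (\<Sum>P\<in>A. \<Sum>Q\<in>A. if \<sigma> P = \<sigma> Q then of_nat N * (c P * cnj (c Q)) else 0)" .
  have "(\<Sum>k=1..N. norm (G k)^2) = norm (complex_of_real (\<Sum>k=1..N. norm (G k)^2))"
    by (simp only: norm_of_real abs_of_nonneg[OF sum_nonneg[OF zero_le_power2]])
  also have "\<dots> \<le> (\<Sum>P\<in>A. \<Sum>Q\<in>A. norm (if \<sigma> P = \<sigma> Q then of_nat N * (c P * cnj (c Q)) else 0))"
    unfolding eq by (rule order_trans[OF norm_sum sum_mono]) (rule norm_sum)
  also have "\<dots> = real N * (\<Sum>P\<in>A. \<Sum>Q\<in>A. if \<sigma> P = \<sigma> Q then norm (c P) * norm (c Q) else 0)"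
    by (simp add: sum_distrib_left norm_mult if_distrib cong: if_cong)
  finally show ?thesis unfolding G_def .
qed



lemma fhat_sq:
  "fhat N f \<alpha> ^ 2 = (\<Sum>P\<in>{1..N}\<times>{1..N}. (f (fst P) * f (snd P)) * e (real (fst P + snd P) * \<alpha>))"
proof -
  have "fhat N f \<alpha> ^ 2 = (\<Sum>n\<in>{1..N}. f n * e (real n * \<alpha>)) * (\<Sum>m\<in>{1..N}. f m * e (real m * \<alpha>))"
    unfolding fhat_def by (simp add: power2_eq_square)
  also have "\<dots> = (\<Sum>n\<in>{1..N}. \<Sum>m\<in>{1..N}. (f n * e (real n * \<alpha>)) * (f m * e (real m * \<alpha>)))"
    by (rule sum_product)
  also have "\<dots> = (\<Sum>n\<in>{1..N}. \<Sum>m\<in>{1..N}. (f n * f m) * e (real (n + m) * \<alpha>))"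
  proof (intro sum.cong refl)
    fix n m
    have ee: "e (real n * \<alpha>) * e (real m * \<alpha>) = e (real (n + m) * \<alpha>)"
      by (simp add: e_add[symmetric] distrib_right)
    show "(f n * e (real n * \<alpha>)) * (f m * e (real m * \<alpha>)) = (f n * f m) * e (real (n + m) * \<alpha>)"
      unfolding ee[symmetric] by (simp only: ac_simps)
  qed
  also have "\<dots> = (\<Sum>P\<in>{1..N}\<times>{1..N}. (f (fst P) * f (snd P)) * e (real (fst P + snd P) * \<alpha>))"
    by (simp add: sum.cartesian_product case_prod_beta)
  finally show ?thesis .
qed

lemma sq2: "(x+y)^2 \<le> 2*x^2 + 2*(y::real)^2"
proof -
  have "0 \<le> (x-y)^2" by simp
  thus ?thesis unfolding power2_eq_square by (simp add: algebra_simps)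
qed

lemma fourth_moment:
  fixes f :: "nat \<Rightarrow> complex" and N :: nat
  assumes Np: "N > 0"
  shows "(\<Sum>k\<in>{1..N}. norm (fhat N f (real k / real N)) ^ 4)
     \<le> 4 * real N * (\<Sum>P\<in>{1..N}\<times>{1..N}. \<Sum>Q\<in>{1..N}\<times>{1..N}.
          if fst P + snd P = fst Q + snd Q then norm (f (fst P) * f (snd P)) * norm (f (fst Q) * f (snd Q)) else 0)"
proof -
  define I2 where "I2 = {1..N}\<times>{1..N}"
  define \<sigma> :: "nat\<times>nat \<Rightarrow> nat" where "\<sigma> P = fst P + snd P" for P
  define a where "a P = f (fst P) * f (snd P)" for P
  define c1 where "c1 P = (if \<sigma> P \<le> N + 1 then a P else 0)" for P
  define c2 where "c2 P = (if \<sigma> P \<le> N + 1 then 0 else a P)" for P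
  define G :: "(nat\<times>nat \<Rightarrow> complex) \<Rightarrow> nat \<Rightarrow> complex" where "G c k = (\<Sum>P\<in>I2. c P * e (real (\<sigma> P) * (real k / real N)))" for c k
  define X :: "(nat\<times>nat \<Rightarrow> complex) \<Rightarrow> real" where "X c = (\<Sum>P\<in>I2. \<Sum>Q\<in>I2. if \<sigma> P = \<sigma> Q then norm (c P) * norm (c Q) else (0::real))" for c
  have fI: "finite I2" unfolding I2_def by simp
  have sI: "P \<in> I2 \<Longrightarrow> 2 \<le> \<sigma> P \<and> \<sigma> P \<le> 2 * N" for P unfolding I2_def \<sigma>_def by auto
  have split: "fhat N f (real k / real N) ^ 2 = G c1 k + G c2 k" for k
    unfolding fhat_sq G_def I2_def[symmetric] sum.distrib[symmetric] c1_def c2_def a_def \<sigma>_def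
    by (intro sum.cong refl) (simp add: distrib_right)
  have o1: "(\<Sum>k=1..N. norm (G c1 k)^2) \<le> real N * X c1"
    unfolding G_def X_def
  proof (rule orth[OF fI Np])
    fix P Q assume h: "P \<in> I2" "Q \<in> I2" "c1 P \<noteq> 0" "c1 Q \<noteq> 0"
    have "\<sigma> P \<le> N + 1" "\<sigma> Q \<le> N + 1" using h(3,4) unfolding c1_def by (auto split: if_splits)
    thus "\<sigma> P < \<sigma> Q + N \<and> \<sigma> Q < \<sigma> P + N" using sI[OF h(1)] sI[OF h(2)] by linarith
  qed
  have o2: "(\<Sum>k=1..N. norm (G c2 k)^2) \<le> real N * X c2"
    unfolding G_def X_def
  proof (rule orth[OF fI Np])
    fix P Q assume h: "P \<in> I2" "Q \<in> I2" "c2 P \<noteq> 0" "c2 Q \<noteq> 0"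
    have "\<not> \<sigma> P \<le> N + 1" "\<not> \<sigma> Q \<le> N + 1" using h(3,4) unfolding c2_def by (auto split: if_splits)
    thus "\<sigma> P < \<sigma> Q + N \<and> \<sigma> Q < \<sigma> P + N" using sI[OF h(1)] sI[OF h(2)] by linarith
  qed
  have Xle: "X c \<le> X a" if "\<And>P. norm (c P) \<le> norm (a P)" for c
    unfolding X_def
    by (intro sum_mono) (auto intro: mult_mono that)
  have "(\<Sum>k\<in>{1..N}. norm (fhat N f (real k / real N)) ^ 4)
      \<le> (\<Sum>k\<in>{1..N}. 2 * norm (G c1 k)^2 + 2 * norm (G c2 k)^2)"
  proof (rule sum_mono)
    fix k
    have "norm (fhat N f (real k / real N)) ^ 4 = norm (G c1 k + G c2 k) ^ 2"
      by (simp flip: split add: norm_power power_mult[symmetric])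
    also have "\<dots> \<le> (norm (G c1 k) + norm (G c2 k))^2"
      by (intro power_mono norm_triangle_ineq) simp
    also have "\<dots> \<le> 2 * norm (G c1 k)^2 + 2 * norm (G c2 k)^2"
      by (rule sq2)
    finally show "norm (fhat N f (real k / real N)) ^ 4 \<le> 2 * norm (G c1 k)^2 + 2 * norm (G c2 k)^2" .
  qed
  also have "\<dots> = 2 * (\<Sum>k=1..N. norm (G c1 k)^2) + 2 * (\<Sum>k=1..N. norm (G c2 k)^2)"
    by (simp add: sum.distrib sum_distrib_left)
  also have "\<dots> \<le> 2 * (real N * X a) + 2 * (real N * X a)"
  proof -
    have x1: "X c1 \<le> X a" by (rule Xle) (simp add: c1_def)
    have x2: "X c2 \<le> X a" by (rule Xle) (simp add: c2_def)
    have "real N * X c1 \<le> real N * X a" using x1 by (intro mult_left_mono) auto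
    moreover have "real N * X c2 \<le> real N * X a" using x2 by (intro mult_left_mono) auto
    ultimately show ?thesis using o1 o2 by linarith
  qed
  also have "\<dots> = 4 * real N * X a" by simp
  finally show ?thesis unfolding X_def I2_def a_def \<sigma>_def .
qed



lemma Xbound:
  fixes f :: "nat \<Rightarrow> complex" and N W b M :: nat and V :: real
  assumes Wp: "W > 0" and V0: "V \<ge> 0"
    and fV: "\<And>n. n \<in> {1..N} \<Longrightarrow> norm (f n) \<le> V"
    and fS: "\<And>n. n \<in> {1..N} \<Longrightarrow> f n \<noteq> 0 \<Longrightarrow> \<exists>p. p \<in> {1..M} \<and> W*n+b = p^2"
  shows "(\<Sum>P\<in>{1..N}\<times>{1..N}. \<Sum>Q\<in>{1..N}\<times>{1..N}.
          if fst P + snd P = fst Q + snd Q then norm (f (fst P) * f (snd P)) * norm (f (fst Q) * f (snd Q)) else 0)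
       \<le> V^4 * real (card (SqEn M))"
proof -
  define I2 where "I2 = {1..N}\<times>{1..N}"
  define t where "t PQ = (if fst (fst PQ) + snd (fst PQ) = fst (snd PQ) + snd (snd PQ)
      then norm (f (fst (fst PQ)) * f (snd (fst PQ))) * norm (f (fst (snd PQ)) * f (snd (snd PQ))) else (0::real))" for PQ :: "(nat\<times>nat)\<times>(nat\<times>nat)"
  define Z where "Z = {PQ \<in> I2 \<times> I2. fst (fst PQ) + snd (fst PQ) = fst (snd PQ) + snd (snd PQ) \<and>
      f (fst (fst PQ)) \<noteq> 0 \<and> f (snd (fst PQ)) \<noteq> 0 \<and> f (fst (snd PQ)) \<noteq> 0 \<and> f (snd (snd PQ)) \<noteq> 0}"
  have fI: "finite (I2 \<times> I2)" unfolding I2_def by simp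
  have "(\<Sum>P\<in>I2. \<Sum>Q\<in>I2. if fst P + snd P = fst Q + snd Q then norm (f (fst P) * f (snd P)) * norm (f (fst Q) * f (snd Q)) else 0)
      = (\<Sum>PQ\<in>I2\<times>I2. t PQ)"
    unfolding t_def by (simp add: sum.cartesian_product case_prod_beta)
  also have "\<dots> \<le> (\<Sum>PQ\<in>I2\<times>I2. if PQ \<in> Z then V^4 else 0)"
  proof (rule sum_mono)
    fix PQ assume PQ: "PQ \<in> I2 \<times> I2"
    obtain n1 n2 n3 n4 where pq: "PQ = ((n1,n2),(n3,n4))" by (metis prod.collapse)
    have n: "n1 \<in> {1..N}" "n2 \<in> {1..N}" "n3 \<in> {1..N}" "n4 \<in> {1..N}" using PQ unfolding pq I2_def by auto
    show "t PQ \<le> (if PQ \<in> Z then V^4 else 0)"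
    proof (cases "PQ \<in> Z")
      case True
      have "t PQ = norm (f n1) * norm (f n2) * (norm (f n3) * norm (f n4))"
        using True unfolding t_def Z_def pq by (simp add: norm_mult)
      also have "\<dots> \<le> V * V * (V * V)"
        using fV[OF n(1)] fV[OF n(2)] fV[OF n(3)] fV[OF n(4)] V0
        by (intro mult_mono) auto
      finally show ?thesis using True by (simp add: power4_eq_xxxx ac_simps)
    next
      case False
      then have "t PQ = 0" using PQ unfolding t_def Z_def pq by auto
      thus ?thesis using False by simp
    qed
  qed
  also have "\<dots> = V^4 * real (card Z)"
  proof -
    have "Z \<subseteq> I2 \<times> I2" unfolding Z_def by auto
    hence "(\<Sum>PQ\<in>I2\<times>I2. if PQ \<in> Z then V^4 else 0) = (\<Sum>PQ\<in>Z. V^4)"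
      using fI by (simp add: sum.If_cases Int_absorb1)
    thus ?thesis by simp
  qed
  also have "\<dots> \<le> V^4 * real (card (SqEn M))"
  proof -
    define q where "q k = (k^2 - b) div W" for k :: nat
    define g where "g K = ((q (fst K), q (fst (snd K))), (q (fst (snd (snd K))), q (snd (snd (snd K)))))"
      for K :: "nat\<times>nat\<times>nat\<times>nat"
    have fSq: "finite (SqEn M)"
      by (rule finite_subset[of _ "{1..M} \<times> {1..M} \<times> {1..M} \<times> {1..M}"]) (auto simp: SqEn_def)
    have qp: "q p = n" if "W*n+b = p^2" for n p
    proof -
      have "p^2 - b = W*n" using that by (metis add_diff_cancel_right')
      thus ?thesis using Wp unfolding q_def by simp
    qed
    have sub: "Z \<subseteq> g ` SqEn M"
    proof
      fix PQ assume PQ: "PQ \<in> Z"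
      obtain n1 n2 n3 n4 where pq: "PQ = ((n1,n2),(n3,n4))" by (metis prod.collapse)
      have h: "n1 \<in> {1..N}" "n2 \<in> {1..N}" "n3 \<in> {1..N}" "n4 \<in> {1..N}" "n1+n2 = n3+n4"
          "f n1 \<noteq> 0" "f n2 \<noteq> 0" "f n3 \<noteq> 0" "f n4 \<noteq> 0"
        using PQ unfolding pq Z_def I2_def by auto
      obtain p1 where p1: "p1 \<in> {1..M}" "W*n1+b = p1^2" using fS[OF h(1,6)] by blast
      obtain p2 where p2: "p2 \<in> {1..M}" "W*n2+b = p2^2" using fS[OF h(2,7)] by blast
      obtain p3 where p3: "p3 \<in> {1..M}" "W*n3+b = p3^2" using fS[OF h(3,8)] by blast
      obtain p4 where p4: "p4 \<in> {1..M}" "W*n4+b = p4^2" using fS[OF h(4,9)] by blast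
      have "p1^2 + p2^2 = p3^2 + p4^2"
      proof -
        have "p1^2 + p2^2 = W*(n1+n2) + 2*b" using p1 p2 by (simp add: algebra_simps)
        also have "\<dots> = W*(n3+n4) + 2*b" using h(5) by simp
        also have "\<dots> = p3^2 + p4^2" using p3 p4 by (simp add: algebra_simps)
        finally show ?thesis .
      qed
      hence "(p1,p2,p3,p4) \<in> SqEn M" using p1 p2 p3 p4 unfolding SqEn_def by auto
      moreover have "PQ = g (p1,p2,p3,p4)"
        unfolding pq g_def using qp[OF p1(2)] qp[OF p2(2)] qp[OF p3(2)] qp[OF p4(2)] by simp
      ultimately show "PQ \<in> g ` SqEn M" by blast
    qed
    have "card Z \<le> card (g ` SqEn M)" by (rule card_mono) (use fSq sub in auto)
    also have "\<dots> \<le> card (SqEn M)" by (rule card_image_le[OF fSq])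
    finally have "real (card Z) \<le> real (card (SqEn M))" by simp
    thus ?thesis by (intro mult_left_mono) auto
  qed
  finally show ?thesis unfolding I2_def .
qed



lemma xlnx_mono: "1 \<le> x \<Longrightarrow> x \<le> y \<Longrightarrow> x * ln x \<le> y * (ln (y::real))"
  by (intro mult_mono) auto

lemma nu_le:
  assumes Wp: "W > 0" and bW: "b \<le> W"
  shows "nu N W b n \<le> sqrt (real (W*(N+1))) * ln (real (W*(N+1)))"
proof -
  define R where "R = real (W*(N+1))"
  have "1 \<le> W*(N+1)" using Wp by (simp add: Suc_le_eq)
  hence R1: "R \<ge> 1" unfolding R_def by (metis of_nat_1 of_nat_le_iff)
  have "sqrt R * ln R \<ge> 0" using R1 by simp
  show ?thesis
  proof (cases "n \<in> {1..N} \<and> (\<exists>p::nat. prime p \<and> W * n + b = p^2)")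
    case False
    have "nu N W b n = 0" unfolding nu_def using False by (rule if_not_P)
    then show ?thesis unfolding R_def[symmetric] using \<open>sqrt R * ln R \<ge> 0\<close> by simp
  next
    case True
    define x where "x = sqrt (real (W*n+b))"
    define \<kappa> where "\<kappa> = real (totient W) / (real W * real (card (HW W b)))"
    have k0: "0 \<le> \<kappa>" unfolding \<kappa>_def by simp
    have k1: "\<kappa> \<le> 1"
    proof (cases "card (HW W b) = 0")
      case True then show ?thesis unfolding \<kappa>_def by simp
    next
      case False
      hence "real W \<le> real W * real (card (HW W b))" using Wp by simp
      moreover have "real (totient W) \<le> real W" using totient_le[of W] by simp
      ultimately have "real (totient W) \<le> real W * real (card (HW W b))" by linarith
      thus ?thesis unfolding \<kappa>_def using Wp False by (simp add: divide_le_eq_1)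
    qed
    have "1 \<le> W*n" using True Wp by (simp add: Suc_le_eq)
    hence "1 \<le> real (W*n+b)" by (metis of_nat_1 of_nat_le_iff le_add1 order_trans)
    hence x1: "1 \<le> x" unfolding x_def by simp
    have "W*n+b \<le> W*(N+1)" using True bW by (simp add: algebra_simps add_mono)
    hence "real (W*n+b) \<le> R" unfolding R_def by (simp only: of_nat_le_iff)
    hence xR: "x \<le> sqrt R" unfolding x_def by simp
    have "nu N W b n = \<kappa> * (2 * x * ln x)" unfolding nu_def \<kappa>_def x_def using True by (simp add: Let_def)
    also have "\<dots> \<le> 1 * (2 * x * ln x)"
      using k1 x1 by (intro mult_right_mono) auto
    also have "\<dots> \<le> 2 * (sqrt R * ln (sqrt R))" using xlnx_mono[OF x1 xR] by simp
    also have "\<dots> = sqrt R * ln R" using R1 by (simp add: ln_sqrt)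
    finally show ?thesis unfolding R_def .
  qed
qed

lemma final_real:
  fixes N W :: nat
  assumes N3: "real N \<ge> 3" and W1: "W \<ge> 1" and W3: "real W ^ 3 \<le> ln (real N) ^ 2"
    and LN: "ln (real N) ^ 2 \<le> real N"
  defines "R \<equiv> real (W*(N+1))"
  defines "M \<equiv> nat \<lceil>sqrt R\<rceil>"
  shows "4 * real N * (sqrt R * ln R)^4 * (real M ^ 2 + 2 * (real (2*M) * (1 + ln (real (2*M))))^2)
     \<le> 9331200 * real N ^ 4 * ln (real N) ^ 8"
proof -
  define L where "L = ln (real N)"
  have "exp 1 \<le> real N" using exp_le N3 by linarith
  hence L1: "L \<ge> 1" unfolding L_def using N3 by (subst ln_ge_iff) auto
  have "1 \<le> W*(N+1)" using W1 by (simp add: Suc_le_eq)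
  hence R1: "R \<ge> 1" unfolding R_def by (metis of_nat_1 of_nat_le_iff)
  have WN: "real W \<le> real N"
  proof -
    have "real W \<le> real W ^ 3" using W1 by (simp add: power_increasing[of 1 3 "real W", simplified])
    thus ?thesis using W3 LN by linarith
  qed
  have "1 * real W \<le> real N * real W" using N3 by (intro mult_right_mono) auto
  hence R2: "R \<le> 2 * real W * real N" unfolding R_def by (simp add: algebra_simps)
  have "2 * real W * real N \<le> 2 * real N * real N" using WN by (intro mult_right_mono mult_left_mono) auto
  hence RN: "R \<le> 2 * real N ^ 2" using R2 by (simp add: power2_eq_square)
  have sR: "sqrt R \<ge> 1" using R1 by simp
  have M1: "real M \<ge> 1" unfolding M_def using sR by linarith
  have M2: "real M \<le> 2 * sqrt R" unfolding M_def using sR by linarith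
  have MM: "real M ^ 2 \<le> 4 * R"
  proof -
    have "real M ^ 2 \<le> (2 * sqrt R)^2" using M1 M2 by (intro power_mono) auto
    thus ?thesis using R1 by (simp add: power_mult_distrib)
  qed
  have lnR: "ln R \<le> 3 * L"
  proof -
    have "ln R \<le> ln (2 * real N ^ 2)" using R1 RN N3 by (subst ln_le_cancel_iff) auto
    also have "\<dots> = ln 2 + 2 * L" unfolding L_def using N3 by (simp add: ln_mult ln_realpow)
    also have "ln 2 \<le> L" unfolding L_def using N3 by simp
    finally show ?thesis by simp
  qed
  have lnR0: "ln R \<ge> 0" using R1 by simp
  have l2M: "1 + ln (real (2*M)) \<le> 10 * L"
  proof -
    have "real (2*M) \<le> 4 * R"
    proof -
      have "real (2*M) \<le> 4 * sqrt R" using M2 by simp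
      also have "sqrt R \<le> R"
      proof -
        have "sqrt R * 1 \<le> sqrt R * sqrt R" by (rule mult_left_mono) (use sR in auto)
        thus ?thesis using R1 by simp
      qed
      finally show ?thesis by simp
    qed
    hence "ln (real (2*M)) \<le> ln (4 * R)" using M1 R1 by (subst ln_le_cancel_iff) auto
    also have "\<dots> \<le> ln (8 * real N ^ 2)" using RN R1 N3 by (subst ln_le_cancel_iff) auto
    also have "\<dots> = ln 8 + 2 * L" unfolding L_def using N3 by (simp add: ln_mult ln_realpow)
    finally have "ln (real (2*M)) \<le> ln 8 + 2 * L" .
    moreover have "ln (8::real) \<le> 7" using ln_le_minus_one[of 8] by simp
    ultimately show ?thesis using L1 by linarith
  qed
  have l2M0: "0 \<le> 1 + ln (real (2*M))" using M1 by simp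
  have E: "real M ^ 2 + 2 * (real (2*M) * (1 + ln (real (2*M))))^2 \<le> 36 * R * (10*L)^2"
  proof -
    have "(real (2*M) * (1 + ln (real (2*M))))^2 = 4 * real M ^ 2 * (1 + ln (real (2*M)))^2"
      by (simp add: power_mult_distrib)
    also have "\<dots> \<le> 4 * (4 * R) * (10*L)^2"
      using MM l2M l2M0 R1 by (intro mult_mono power_mono) auto
    finally have a: "(real (2*M) * (1 + ln (real (2*M))))^2 \<le> 16 * R * (10*L)^2" by simp
    have "1 \<le> (10*L)^2" using L1 by (intro one_le_power) auto
    hence "4 * R * 1 \<le> 4 * R * (10*L)^2" using R1 by (intro mult_left_mono) auto
    thus ?thesis using a MM by linarith
  qed
  have V: "(sqrt R * ln R)^4 = R^2 * ln R ^ 4"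
    using R1 by (simp add: power_mult_distrib) (simp add: power_mult[symmetric] real_sqrt_pow2 numeral_eq_Suc)
  have "4 * real N * (sqrt R * ln R)^4 * (real M ^ 2 + 2 * (real (2*M) * (1 + ln (real (2*M))))^2)
      \<le> 4 * real N * (R^2 * ln R ^ 4) * (36 * R * (10*L)^2)"
    unfolding V using E N3 R1 lnR0 by (intro mult_left_mono) auto
  also have "\<dots> = 144 * 100 * real N * R^3 * ln R ^ 4 * L^2" by (simp add: power2_eq_square power3_eq_cube power4_eq_xxxx)
  also have "\<dots> \<le> 144 * 100 * real N * (8 * real W ^ 3 * real N ^ 3) * (3*L) ^ 4 * L^2"
  proof -
    have "R^3 \<le> (2 * real W * real N)^3" using R2 R1 by (intro power_mono) auto
    hence r3: "R^3 \<le> 8 * real W ^ 3 * real N ^ 3" by (simp add: power_mult_distrib)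
    have l4: "ln R ^ 4 \<le> (3*L)^4" using lnR lnR0 by (intro power_mono) auto
    show ?thesis using r3 l4 N3 R1 lnR0 L1
      by (intro mult_mono mult_left_mono) auto
  qed
  also have "\<dots> \<le> 144 * 100 * real N * (8 * L^2 * real N ^ 3) * (3*L) ^ 4 * L^2"
    using W3 N3 L1 unfolding L_def[symmetric] by (intro mult_mono mult_left_mono) auto
  also have "\<dots> = 9331200 * real N ^ 4 * L ^ 8"
    by (simp add: power_mult_distrib power2_eq_square power3_eq_cube power4_eq_xxxx eval_nat_numeral)
  finally show ?thesis unfolding L_def .
qed



lemma WW_bound:
  assumes w3: "3 \<le> w"
  shows "WW w > 0 \<and> ln (real (WW w)) \<le> ln 8 + real (nat \<lfloor>w\<rfloor>) * ln (real (nat \<lfloor>w\<rfloor>))"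
proof -
  define m where "m = nat \<lfloor>w\<rfloor>"
  define S where "S = {p::nat. prime p \<and> 2 < p \<and> real p < w}"
  have m3: "m \<ge> 3" unfolding m_def using w3 by linarith
  have Sm: "S \<subseteq> {1..m}"
  proof
    fix p assume "p \<in> S"
    hence "prime p" "real p < w" unfolding S_def by auto
    hence "p \<le> m" unfolding m_def by linarith
    thus "p \<in> {1..m}" using prime_gt_0_nat[OF \<open>prime p\<close>] by simp
  qed
  have fS: "finite S" using Sm finite_subset by blast
  have pos: "0 < (\<Prod>p\<in>S. p)" by (rule prod_pos) (auto simp: S_def prime_gt_0_nat)
  have "(\<Prod>p\<in>S. p) \<le> (\<Prod>p\<in>S. m)" by (rule prod_mono) (use Sm in auto)
  also have "\<dots> = m ^ card S" by simp
  also have "\<dots> \<le> m ^ m"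
  proof -
    have "card S \<le> card {1..m}" by (rule card_mono) (use Sm in auto)
    thus ?thesis using m3 by (intro power_increasing) auto
  qed
  finally have pm: "(\<Prod>p\<in>S. p) \<le> m ^ m" .
  have W: "WW w = 8 * (\<Prod>p\<in>S. p)" unfolding WW_def S_def ..
  have Wp: "WW w > 0" unfolding W using pos by simp
  have "real (\<Prod>p\<in>S. p) \<le> real (m ^ m)" using pm by (simp only: of_nat_le_iff)
  hence "real (WW w) \<le> 8 * real m ^ m" unfolding W by simp
  hence "ln (real (WW w)) \<le> ln (8 * real m ^ m)" using Wp by (subst ln_le_cancel_iff) auto
  also have "\<dots> = ln 8 + real m * ln (real m)" using m3 by (simp add: ln_mult ln_realpow)
  finally show ?thesis using Wp unfolding m_def by simp
qed

lemma asymp_facts: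
  fixes C\<^sub>0 :: real assumes "C\<^sub>0 > 0"
  shows "eventually (\<lambda>N::nat. 3 * ln 8 + 3 * (C\<^sub>0 * ln (ln (ln (real N)))) * ln (C\<^sub>0 * ln (ln (ln (real N)))) \<le> 2 * ln (ln (real N))) sequentially"
    "eventually (\<lambda>N::nat. ln (real N) ^ 2 \<le> real N) sequentially"
    "eventually (\<lambda>N::nat. 3 \<le> real N) sequentially"
  using assms by real_asymp+

theorem lemma5p2:
  fixes C\<^sub>0 :: real
  assumes "C\<^sub>0 > 0"
  shows "\<exists>C::real. \<exists>N\<^sub>0::nat. \<forall>N\<ge>N\<^sub>0. \<forall>w::real. \<forall>b::nat. \<forall>f::nat \<Rightarrow> complex.
           3 \<le> w \<longrightarrow> w \<le> C\<^sub>0 * ln (ln (ln (real N))) \<longrightarrow>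
           b \<in> ZW (WW w) \<longrightarrow>
           (\<forall>n\<in>{1..N}. norm (f n) \<le> nu N (WW w) b n) \<longrightarrow>
           (\<Sum>n\<in>{1..N}. norm (fhat N f (real n / real N)) ^ 4)
             \<le> C * real N ^ 4 * (ln (real N)) ^ 8"
proof -
  have "eventually (\<lambda>N::nat. (3 * ln 8 + 3 * (C\<^sub>0 * ln (ln (ln (real N)))) * ln (C\<^sub>0 * ln (ln (ln (real N)))) \<le> 2 * ln (ln (real N)))
      \<and> ln (real N) ^ 2 \<le> real N \<and> 3 \<le> real N) sequentially"
    using eventually_conj[OF asymp_facts(1)[OF assms] eventually_conj[OF asymp_facts(2)[OF assms] asymp_facts(3)[OF assms]]] .
  then obtain N0 where N0: "\<And>N. N \<ge> N0 \<Longrightarrow> (3 * ln 8 + 3 * (C\<^sub>0 * ln (ln (ln (real N)))) * ln (C\<^sub>0 * ln (ln (ln (real N)))) \<le> 2 * ln (ln (real N)))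
      \<and> ln (real N) ^ 2 \<le> real N \<and> 3 \<le> real N"
    unfolding eventually_sequentially by blast
  have main: "(\<Sum>n\<in>{1..N}. norm (fhat N f (real n / real N)) ^ 4) \<le> 9331200 * real N ^ 4 * ln (real N) ^ 8"
    if NN0: "N \<ge> N0" and w3: "3 \<le> w" and wC: "w \<le> C\<^sub>0 * ln (ln (ln (real N)))"
      and bZ: "b \<in> ZW (WW w)" and fnu: "\<forall>n\<in>{1..N}. norm (f n) \<le> nu N (WW w) b n"
    for N :: nat and w :: real and b :: nat and f :: "nat \<Rightarrow> complex"
  proof -
    define W where "W = WW w"
    define L where "L = ln (real N)"
    define x where "x = C\<^sub>0 * ln (ln (ln (real N)))"
    define m where "m = nat \<lfloor>w\<rfloor>"
    have as: "3 * ln 8 + 3 * x * ln x \<le> 2 * ln L" "L ^ 2 \<le> real N" "3 \<le> real N"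
      using N0[OF NN0] unfolding x_def L_def by auto
    have Wb: "W > 0" "ln (real W) \<le> ln 8 + real m * ln (real m)"
      using WW_bound[OF w3] unfolding W_def m_def by auto
    have m3n: "3 \<le> m" unfolding m_def using w3 by linarith
    hence m3: "3 \<le> real m" by simp
    have "real m = of_int \<lfloor>w\<rfloor>" unfolding m_def using w3 by simp
    hence mw: "real m \<le> x" unfolding x_def using wC of_int_floor_le[of w] by linarith
    have "real m * ln (real m) \<le> x * ln x" by (rule xlnx_mono) (use m3 mw in auto)
    hence lnW: "3 * ln (real W) \<le> 2 * ln L" using Wb(2) as(1) by linarith
    have L1: "L > 0" unfolding L_def using as(3) by simp
    have W3: "real W ^ 3 \<le> L ^ 2"
    proof -
      have e1: "ln (real W ^ 3) = 3 * ln (real W)" using Wb(1) by (simp add: ln_realpow)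
      have e2: "ln (L ^ 2) = 2 * ln L" using L1 by (simp add: ln_realpow)
      have "real W ^ 3 = exp (ln (real W ^ 3))" using Wb(1) by simp
      also have "\<dots> = exp (3 * ln (real W))" unfolding e1 ..
      also have "\<dots> \<le> exp (2 * ln L)" using lnW by simp
      also have "\<dots> = exp (ln (L ^ 2))" unfolding e2 ..
      also have "\<dots> = L ^ 2" using L1 by simp
      finally show ?thesis .
    qed
    have b: "1 \<le> b" "b \<le> W" using bZ unfolding ZW_def W_def by auto
    define R where "R = real (W*(N+1))"
    define M where "M = nat \<lceil>sqrt R\<rceil>"
    define V where "V = sqrt R * ln R"
    have "1 \<le> W*(N+1)" using Wb(1) by (simp add: Suc_le_eq)
    hence R1: "1 \<le> R" unfolding R_def by (metis of_nat_1 of_nat_le_iff)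
    have V0: "V \<ge> 0" unfolding V_def using R1 by simp
    have Np: "N > 0" using as(3) by simp
    have fV: "norm (f n) \<le> V" if "n \<in> {1..N}" for n
      using fnu that nu_le[OF Wb(1) b(2), of N n] unfolding V_def R_def W_def by force
    have fS: "\<exists>p. p \<in> {1..M} \<and> W*n+b = p^2" if n: "n \<in> {1..N}" "f n \<noteq> 0" for n
    proof -
      have "nu N W b n \<noteq> 0" using fnu n unfolding W_def by (metis norm_le_zero_iff)
      have "n \<in> {1..N} \<and> (\<exists>p::nat. prime p \<and> W * n + b = p^2)"
      proof (rule ccontr)
        assume "\<not> (n \<in> {1..N} \<and> (\<exists>p::nat. prime p \<and> W * n + b = p^2))"
        hence "nu N W b n = 0" unfolding nu_def by (rule if_not_P)
        with \<open>nu N W b n \<noteq> 0\<close> show False by simp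
      qed
      then obtain p where p: "prime p" "W*n+b = p^2" by blast
      have "W*n+b \<le> W*(N+1)" using n b by (simp add: algebra_simps add_mono)
      hence "p^2 \<le> W*(N+1)" using p(2) by simp
      hence "real (p^2) \<le> R" unfolding R_def by (simp only: of_nat_le_iff)
      hence "real p \<le> sqrt R" by (intro real_le_rsqrt) simp
      hence "real p \<le> of_int \<lceil>sqrt R\<rceil>" using le_of_int_ceiling[of "sqrt R"] by linarith
      hence "int p \<le> \<lceil>sqrt R\<rceil>" by (metis of_int_le_iff of_int_of_nat_eq)
      hence "p \<le> M" unfolding M_def by linarith
      moreover have "1 \<le> p" using prime_gt_0_nat[OF p(1)] by simp
      ultimately show ?thesis using p by auto
    qed
    have "(\<Sum>n\<in>{1..N}. norm (fhat N f (real n / real N)) ^ 4)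
        \<le> 4 * real N * (\<Sum>P\<in>{1..N}\<times>{1..N}. \<Sum>Q\<in>{1..N}\<times>{1..N}.
          if fst P + snd P = fst Q + snd Q then norm (f (fst P) * f (snd P)) * norm (f (fst Q) * f (snd Q)) else 0)"
      by (rule fourth_moment[OF Np])
    also have "\<dots> \<le> 4 * real N * (V^4 * real (card (SqEn M)))"
      using Xbound[where f=f and N=N and W=W and b=b and M=M and V=V, OF Wb(1) V0 fV fS] Np by (intro mult_left_mono) auto
    also have "\<dots> \<le> 4 * real N * (V^4 * (real M ^ 2 + 2 * (real (2*M) * (1 + ln (real (2*M))))^2))"
      using sq_energy[of M] Np by (intro mult_left_mono) auto
    also have "\<dots> = 4 * real N * (sqrt R * ln R)^4 * (real M ^ 2 + 2 * (real (2*M) * (1 + ln (real (2*M))))^2)"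
      unfolding V_def by simp
    also have "\<dots> \<le> 9331200 * real N ^ 4 * ln (real N) ^ 8"
      unfolding R_def M_def
      by (rule final_real) (use as Wb(1) W3 in \<open>auto simp: L_def Suc_le_eq\<close>)
    finally show ?thesis .
  qed
  show ?thesis by (intro exI[of _ 9331200] exI[of _ N0] allI impI, rule main) assumption+
qed

end
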